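(* Let $T$ be the theory of structures $(X,R,f)$ where $R$ is a reflexive and transitive binary relation and $f$ is a unary operation which strictly preserves $R$, namely, for all $d,e$: if $d\,R\,e$ and $d\neq e$, then $f(d)\,R\,f(e)$ and $f(d)\neq f(e)$. Then $T$ does not have the amalgamation property.
   Context: A theory has the amalgamation property (AP) if whenever $\mathbf{A},\mathbf{B},\mathbf{C}$ are models with $\mathbf{C}\subseteq\mathbf{A}$, $\mathbf{C}\subseteq\mathbf{B}$ and $C=A\cap B$, there are a model $\mathbf{D}$ and embeddings of $\mathbf{A}$ and $\mathbf{B}$ into $\mathbf{D}$ which agree on $C$. *)

theory Defs
  imports Main
begin

text \<open>A structure (X, R, f): carrier X, binary relation R, unary operation f.
  The relation and operation are only meaningful on the carrier.\<close>

type_synonym 'a str = "'a set \<times> ('a \<Rightarrow> 'a \<Rightarrow> bool) \<times> ('a \<Rightarrow> 'a)"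

definition carr :: "'a str \<Rightarrow> 'a set" where "carr S = fst S"
definition rel :: "'a str \<Rightarrow> 'a \<Rightarrow> 'a \<Rightarrow> bool" where "rel S = fst (snd S)"
definition op :: "'a str \<Rightarrow> 'a \<Rightarrow> 'a" where "op S = snd (snd S)"

definition is_model :: "'a str \<Rightarrow> bool" where
  "is_model S \<longleftrightarrow>
     (\<forall>d e. rel S d e \<longrightarrow> d \<in> carr S \<and> e \<in> carr S) \<and>
     (\<forall>d\<in>carr S. op S d \<in> carr S) \<and>
     (\<forall>d\<in>carr S. rel S d d) \<and>
     (\<forall>d\<in>carr S. \<forall>e\<in>carr S. \<forall>g\<in>carr S. rel S d e \<longrightarrow> rel S e g \<longrightarrow> rel S d g) \<and>
     (\<forall>d\<in>carr S. \<forall>e\<in>carr S. rel S d e \<and> d \<noteq> e \<longrightarrow>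
          rel S (op S d) (op S e) \<and> op S d \<noteq> op S e)"

definition substr :: "'a str \<Rightarrow> 'a str \<Rightarrow> bool" where
  "substr C A \<longleftrightarrow> carr C \<subseteq> carr A \<and>
     (\<forall>d\<in>carr C. \<forall>e\<in>carr C. rel C d e \<longleftrightarrow> rel A d e) \<and>
     (\<forall>d\<in>carr C. op C d = op A d)"

definition embedding :: "('a \<Rightarrow> 'b) \<Rightarrow> 'a str \<Rightarrow> 'b str \<Rightarrow> bool" where
  "embedding g A D \<longleftrightarrow> g ` carr A \<subseteq> carr D \<and> inj_on g (carr A) \<and>
     (\<forall>d\<in>carr A. \<forall>e\<in>carr A. rel A d e \<longleftrightarrow> rel D (g d) (g e)) \<and>
     (\<forall>d\<in>carr A. g (op A d) = op D (g d))"

definition amalgamation_property :: "'a itself \<Rightarrow> 'b itself \<Rightarrow> bool" where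
  "amalgamation_property _ _ \<longleftrightarrow>
     (\<forall>A B C :: 'a str. is_model A \<and> is_model B \<and> is_model C \<and>
        substr C A \<and> substr C B \<and> carr C = carr A \<inter> carr B \<longrightarrow>
        (\<exists>(D :: 'b str) g h. is_model D \<and> embedding g A D \<and> embedding h B D \<and>
            (\<forall>c\<in>carr C. g c = h c)))"

end

theory Submission
  imports Defs
begin

definition fX :: "nat \<Rightarrow> nat" where
  "fX x = (if x = 0 then 1 else if x = 1 then 1 else 2)"

definition SC :: "nat str" where
  "SC = ({0,1,2}, (\<lambda>x y. (x \<in> {0,1,2} \<and> x = y) \<or> (x,y) \<in> {(1,2),(2,1)}), fX)"
definition SA :: "nat str" where
  "SA = ({0,1,2,3}, (\<lambda>x y. (x \<in> {0,1,2,3} \<and> x = y) \<or> (x,y) \<in> {(1,2),(2,1),(3,0)}), fX)"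
definition SB :: "nat str" where
  "SB = ({0,1,2,4}, (\<lambda>x y. (x \<in> {0,1,2,4} \<and> x = y) \<or> (x,y) \<in> {(1,2),(2,1),(0,4)}), fX)"

lemma mC: "is_model SC"
  unfolding is_model_def SC_def carr_def rel_def op_def fX_def by auto
lemma mA: "is_model SA"
  unfolding is_model_def SA_def carr_def rel_def op_def fX_def by auto
lemma mB: "is_model SB"
  unfolding is_model_def SB_def carr_def rel_def op_def fX_def by auto
lemma sA: "substr SC SA"
  unfolding substr_def SA_def SC_def carr_def rel_def op_def by auto
lemma sB: "substr SC SB"
  unfolding substr_def SB_def SC_def carr_def rel_def op_def by auto
lemma iC: "carr SC = carr SA \<inter> carr SB"
  unfolding SA_def SB_def SC_def carr_def by auto

theorem proposition4p2:
  shows "\<not> amalgamation_property TYPE(nat) TYPE('b)"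
proof
  assume "amalgamation_property TYPE(nat) TYPE('b)"
  then obtain D :: "'b str" and g h where D: "is_model D" and g: "embedding g SA D"
    and h: "embedding h SB D" and gh: "\<forall>c\<in>carr SC. g c = h c"
    unfolding amalgamation_property_def using mA mB mC sA sB iC by blast
  have cA: "carr SA = {0,1,2,3}" and cB: "carr SB = {0,1,2,4}" and cC: "carr SC = {0,1,2}"
    by (simp_all add: SA_def SB_def SC_def carr_def)
  have g30: "rel D (g 3) (g 0)" using g unfolding embedding_def
    by (auto simp: SA_def carr_def rel_def)
  have h04: "rel D (h 0) (h 4)" using h unfolding embedding_def
    by (auto simp: SB_def carr_def rel_def)
  have g03: "\<not> rel D (g 0) (g 3)" using g unfolding embedding_def
    by (auto simp: SA_def carr_def rel_def)
  have e0: "g 0 = h 0" and e2: "g 2 = h 2" using gh cC by auto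
  have inD: "g 3 \<in> carr D" "g 0 \<in> carr D" "h 4 \<in> carr D"
    using g h cA cB unfolding embedding_def by auto
  have r34: "rel D (g 3) (h 4)"
    using D inD g30 h04 e0 unfolding is_model_def by metis
  have ne: "g 3 \<noteq> h 4"
  proof
    assume "g 3 = h 4"
    then have "rel D (g 0) (g 3)" using h04 e0 by simp
    with g03 show False by simp
  qed
  have "op D (g 3) \<noteq> op D (h 4)"
    using D inD r34 ne unfolding is_model_def by blast
  moreover have "op D (g 3) = g 2" using g cA unfolding embedding_def
    by (auto simp: SA_def op_def fX_def)
  moreover have "op D (h 4) = h 2" using h cB unfolding embedding_def
    by (auto simp: SB_def op_def fX_def)
  ultimately show False using e2 by simp
qed

end
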